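(* Let $E=\tfrac12(\mathbb 1+\vec e\cdot\vec\sigma)$ be an unbiased qubit effect with $\|\vec e\|<1$, and let $B=\tfrac12(b^0\mathbb 1+\vec b\cdot\vec\sigma)$ be any qubit effect. If the two-outcome POVMs $(E,\mathbb 1-E)$ and $(B,\mathbb 1-B)$ are jointly measurable, then $$\|\vec e\|^2+\|\vec b\|^2-(\vec e\cdot\vec b)^2\le 1,$$ equivalently $\|\vec e+\vec b\|+\|\vec e-\vec b\|\le 2$. Conversely, if $B$ is also unbiased ($b^0=1$) and $\|\vec e\|^2+\|\vec b\|^2\le 1+(\vec e\cdot\vec b)^2$, then $(E,\mathbb 1-E)$ and $(B,\mathbb 1-B)$ are jointly measurable.
   Context: $\vec\sigma=(\sigma_1,\sigma_2,\sigma_3)$ are the Pauli matrices, $\sigma_1=\begin{pmatrix}0&1\\1&0\end{pmatrix}$, $\sigma_2=\begin{pmatrix}0&-i\\i&0\end{pmatrix}$, $\sigma_3=\begin{pmatrix}1&0\\0&-1\end{pmatrix}$. A qubit effect is a $2\times 2$ matrix $E$ with $0\le E\le\mathbb 1$; every effect can be written $E=\tfrac12(e^0\mathbb 1+\vec e\cdot\vec\sigma)$ with $(e^0,\vec e)\in\mathbb R^4$, $\|\vec e\|\le\min\{e^0,2-e^0\}$; it is unbiased if $e^0=1$. Joint measurability of two POVMs $(E_i)$, $(B_j)$: existence of a POVM $(N_{ij})$ with $\sum_jN_{ij}=E_i$, $\sum_iN_{ij}=B_j$. *)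

theory Defs
  imports "HOL-Analysis.Analysis"
begin

type_synonym qmat = "complex ^ 2 ^ 2"

definition sigma1 :: qmat where
  "sigma1 = (\<chi> i j. if i = j then 0 else 1)"
definition sigma2 :: qmat where
  "sigma2 = (\<chi> i j. if i = j then 0 else if i = 1 then - \<i> else \<i>)"
definition sigma3 :: qmat where
  "sigma3 = (\<chi> i j. if i \<noteq> j then 0 else if i = 1 then 1 else -1)"

definition bloch :: "real \<Rightarrow> real ^ 3 \<Rightarrow> qmat" where
  "bloch a0 a = (1/2) *\<^sub>R (a0 *\<^sub>R mat 1 + (a $ 1) *\<^sub>R sigma1
                 + (a $ 2) *\<^sub>R sigma2 + (a $ 3) *\<^sub>R sigma3)"

definition psd :: "qmat \<Rightarrow> bool" where
  "psd A \<longleftrightarrow> (\<forall>x :: complex ^ 2.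
     let q = (\<Sum>i\<in>UNIV. cnj (x $ i) * (A *v x) $ i) in Im q = 0 \<and> Re q \<ge> 0)"

definition qubit_effect :: "qmat \<Rightarrow> bool" where
  "qubit_effect E \<longleftrightarrow> psd E \<and> psd (mat 1 - E)"

definition povm :: "('i::finite \<Rightarrow> qmat) \<Rightarrow> bool" where
  "povm M \<longleftrightarrow> (\<forall>i. psd (M i)) \<and> (\<Sum>i\<in>UNIV. M i) = mat 1"

definition jointly_measurable ::
    "('i::finite \<Rightarrow> qmat) \<Rightarrow> ('j::finite \<Rightarrow> qmat) \<Rightarrow> bool" where
  "jointly_measurable M K \<longleftrightarrow> (\<exists>N :: 'i \<times> 'j \<Rightarrow> qmat. povm N \<and>
      (\<forall>i. (\<Sum>j\<in>UNIV. N (i, j)) = M i) \<and> (\<forall>j. (\<Sum>i\<in>UNIV. N (i, j)) = K j))"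

definition two_outcome :: "qmat \<Rightarrow> bool \<Rightarrow> qmat" where
  "two_outcome E = (\<lambda>b. if b then E else mat 1 - E)"

end

theory Submission imports Defs begin

definition qf :: "qmat \<Rightarrow> complex^2 \<Rightarrow> complex" where
  "qf A x = (\<Sum>i\<in>UNIV. cnj (x $ i) * (A *v x) $ i)"

lemma qf_expand: "qf A v = cnj(v$1) * (A$1$1 * v $ 1 + A$1$2 * v $ 2) + cnj(v$2)*(A$2$1 * v $ 1 + A$2$2 * v $ 2)"
  by (simp add: qf_def matrix_vector_mult_def sum_2)

lemma psd_qf: "psd A \<longleftrightarrow> (\<forall>v. Im (qf A v) = 0 \<and> Re (qf A v) \<ge> 0)"
  by (simp add: psd_def qf_def Let_def)

lemma bloch_entries:
  "bloch x m $1$1 = complex_of_real ((x + m$3)/2)"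
  "bloch x m $2$2 = complex_of_real ((x - m$3)/2)"
  "bloch x m $1$2 = Complex (m$1/2) (- m$2/2)"
  "bloch x m $2$1 = Complex (m$1/2) (m$2/2)"
  by (auto simp: bloch_def sigma1_def sigma2_def sigma3_def mat_def complex_eq_iff)

lemma qf_bloch_Re:
  "2 * Re (qf (bloch x m) v) = (x + m$3) * ((Re (v$1))^2 + (Im (v$1))^2) + (x - m$3) * ((Re (v$2))^2 + (Im (v$2))^2)
     + 2 * m$1 * (Re (v$1) * Re (v$2) + Im (v$1) * Im (v$2)) + 2 * m$2 * (Re (v$1) * Im (v$2) - Im (v$1) * Re (v$2))"
  by (simp add: qf_expand bloch_entries power2_eq_square field_simps)

lemma qf_bloch_Im: "Im (qf (bloch x m) v) = 0"
  by (simp add: qf_expand bloch_entries power2_eq_square algebra_simps)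

lemma norm3: "(norm (m::real^3))^2 = (m$1)^2+(m$2)^2+(m$3)^2"
  unfolding power2_norm_eq_inner by (simp add: inner_vec_def sum_3 power2_eq_square)

lemma lagrange3: "((m1::real)*u1+m2*u2+m3*u3)^2 \<le> (m1^2+m2^2+m3^2)*(u1^2+u2^2+u3^2)"
proof -
  have "(m1^2+m2^2+m3^2)*(u1^2+u2^2+u3^2) - (m1*u1+m2*u2+m3*u3)^2 = (m1*u2-m2*u1)^2+(m1*u3-m3*u1)^2+(m2*u3-m3*u2)^2"
    by (simp add: power2_eq_square algebra_simps)
  moreover have "(m1*u2-m2*u1)^2+(m1*u3-m3*u1)^2+(m2*u3-m3*u2)^2 \<ge> 0" by simp
  ultimately show ?thesis by linarith
qed

lemma psd_bloch_if: assumes "norm m \<le> x" shows "psd (bloch x m)"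
  unfolding psd_qf
proof (intro allI conjI)
  fix v
  show "Im (qf (bloch x m) v) = 0" by (rule qf_bloch_Im)
  define a1 where "a1 = Re (v$1)"
  define a2 where "a2 = Im (v$1)"
  define c1 where "c1 = Re (v$2)"
  define c2 where "c2 = Im (v$2)"
  define s where "s = a1^2+a2^2+c1^2+c2^2"
  define d where "d = a1^2+a2^2-c1^2-c2^2"
  define P where "P = a1*c1+a2*c2"
  define Q where "Q = a1*c2-a2*c1"
  define r where "r = norm m"
  define T where "T = m$1*(2*P) + m$2*(2*Q) + m$3*d"
  have e: "2 * Re (qf (bloch x m) v) = x * s + T"
    unfolding qf_bloch_Re T_def s_def d_def P_def Q_def a1_def a2_def c1_def c2_def
    by (simp add: algebra_simps)
  have ss: "(2*P)^2 + (2*Q)^2 + d^2 = s^2"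
    unfolding s_def d_def P_def Q_def by (simp add: power2_eq_square algebra_simps)
  have "T^2 \<le> r^2 * s^2"
    using lagrange3[of "m$1" "2*P" "m$2" "2*Q" "m$3" d] unfolding T_def r_def norm3 ss .
  hence "T^2 \<le> (r * s)^2" by (simp add: power_mult_distrib)
  moreover have "s \<ge> 0" "r \<ge> 0" unfolding s_def r_def by auto
  ultimately have "\<bar>T\<bar> \<le> r * s" using power2_le_imp_le[of "\<bar>T\<bar>" "r * s"] by simp
  moreover have "r * s \<le> x * s" using assms \<open>s\<ge>0\<close> unfolding r_def by (simp add: mult_right_mono)
  ultimately have "x * s + T \<ge> 0" by linarith
  with e show "Re (qf (bloch x m) v) \<ge> 0" by linarith
qed

lemma alg: assumes "q = r^2 - m3^2" shows "(x + m3) * (r - m3)^2 + (x - m3) * q - 2 * (r - m3) * q = 2*r*(r - m3)*(x - (r::real))"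
  unfolding assms by (simp add: power2_eq_square algebra_simps)

lemma psd_bloch_only: assumes "psd (bloch x m)" shows "norm m \<le> x"
proof -
  define r where "r = norm m"
  have r2: "r^2 = (m$1)^2+(m$2)^2+(m$3)^2" unfolding r_def norm3 ..
  have r0: "r \<ge> 0" unfolding r_def by simp
  have "(m$3)^2 \<le> r^2" using r2 by simp
  hence am3: "\<bar>m$3\<bar> \<le> r" using r0 power2_le_imp_le[of "\<bar>m$3\<bar>" r] by simp
  hence m3: "m$3 \<le> r" by simp
  show ?thesis
  proof (cases "m$3 = r")
    case True
    define v :: "complex^2" where "v = vector [0, 1]"
    have "Re (qf (bloch x m) v) \<ge> 0" using assms unfolding psd_qf by blast
    hence "2 * Re (qf (bloch x m) v) \<ge> 0" by simp
    hence "x - m$3 \<ge> 0" unfolding qf_bloch_Re v_def by simp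
    thus ?thesis using True r_def by simp
  next
    case False
    with m3 have lt: "m$3 < r" by simp
    define v :: "complex^2" where "v = vector [complex_of_real (r - m$3), Complex (- m$1) (- m$2)]"
    have "Re (qf (bloch x m) v) \<ge> 0" using assms unfolding psd_qf by blast
    hence "2 * Re (qf (bloch x m) v) \<ge> 0" by simp
    hence "(x + m$3) * (r - m$3)^2 + (x - m$3) * ((m$1)^2 + (m$2)^2)
     + 2 * m$1 * ((r - m$3) * (- m$1)) + 2 * m$2 * ((r - m$3) * (- m$2)) \<ge> 0"
      unfolding qf_bloch_Re v_def by simp
    moreover have "(x + m$3) * (r - m$3)^2 + (x - m$3) * ((m$1)^2 + (m$2)^2)
     + 2 * m$1 * ((r - m$3) * (- m$1)) + 2 * m$2 * ((r - m$3) * (- m$2)) = 2*r*(r - m$3)*(x - r)"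
    proof -
      have q: "(m$1)^2 + (m$2)^2 = r^2 - (m$3)^2" using r2 by simp
      have "2 * m$1 * ((r - m$3) * (- m$1)) + 2 * m$2 * ((r - m$3) * (- m$2)) = - 2 * (r - m$3) * ((m$1)^2 + (m$2)^2)"
        by (simp add: power2_eq_square algebra_simps)
      thus ?thesis using alg[OF q, of x] by linarith
    qed
    ultimately have "2*r*(r - m$3)*(x - r) \<ge> 0" by linarith
    moreover have "r > 0" using lt am3 by linarith
    moreover have "2*r*(r - m$3) > 0" using lt \<open>r>0\<close> by simp
    ultimately have "x - r \<ge> 0" by (metis zero_le_mult_iff not_less)
    thus ?thesis unfolding r_def by simp
  qed
qed

lemma psd_bloch: "psd (bloch x m) \<longleftrightarrow> norm m \<le> x"
  using psd_bloch_if psd_bloch_only by blast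

lemma mat_eq2: "(A::qmat) = B \<longleftrightarrow> A$1$1 = B$1$1 \<and> A$1$2 = B$1$2 \<and> A$2$1 = B$2$1 \<and> A$2$2 = B$2$2"
  by (auto simp: vec_eq_iff forall_2)

lemma vec3_eq: "(a::real^3) = b \<longleftrightarrow> a$1 = b$1 \<and> a$2 = b$2 \<and> a$3 = b$3"
  by (auto simp: vec_eq_iff forall_3)

lemma bloch_add: "bloch x m + bloch y n = bloch (x+y) (m+n)"
  by (simp add: mat_eq2 bloch_entries complex_eq_iff field_simps)

lemma bloch_diff: "bloch x m - bloch y n = bloch (x-y) (m-n)"
  by (simp add: mat_eq2 bloch_entries complex_eq_iff field_simps)

lemma mat1_bloch: "mat 1 = bloch 2 0"
  by (simp add: mat_eq2 bloch_entries complex_eq_iff mat_def)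

lemma bloch_inj: "bloch x m = bloch y n \<longleftrightarrow> x = y \<and> m = n"
  by (auto simp: mat_eq2 bloch_entries complex_eq_iff vec3_eq)

lemma psd_is_bloch: assumes "psd A" shows "\<exists>x m. A = bloch x m"
proof -
  have h: "Im (qf A v) = 0" for v using assms unfolding psd_qf by blast
  have a: "Im (A$1$1) = 0" using h[of "vector [1,0]"] by (simp add: qf_expand)
  have b: "Im (A$2$2) = 0" using h[of "vector [0,1]"] by (simp add: qf_expand)
  have c: "Im (A$1$1 + A$1$2 + A$2$1 + A$2$2) = 0" using h[of "vector [1,1]"] by (simp add: qf_expand)
  have d: "Re (A$1$2) - Re (A$2$1) = 0" using h[of "vector [1,\<i>]"] a b by (simp add: qf_expand)
  define x where "x = Re (A$1$1) + Re (A$2$2)"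
  define m :: "real^3" where "m = vector [2 * Re (A$2$1), 2 * Im (A$2$1), Re (A$1$1) - Re (A$2$2)]"
  have "A = bloch x m" using a b c d
    by (simp add: mat_eq2 bloch_entries complex_eq_iff x_def m_def field_simps)
  thus ?thesis by blast
qed

lemma real_fwd:
  fixes A C s p :: real
  assumes "A \<ge> 0" "C \<ge> 0" "A^2 = s + 2*p" "C^2 = s - 2*p" "A + C \<le> 2"
  shows "s - p^2 \<le> 1"
proof -
  have "(A+C)^2 \<le> 2^2" using assms by (intro power_mono) auto
  moreover have "(A+C)^2 = A^2 + C^2 + 2*(A*C)" by (simp add: power2_sum)
  ultimately have ac: "A*C \<le> 2 - s" using assms(3,4) by simp
  have "(A*C)^2 \<le> (2 - s)^2" using ac assms by (intro power_mono) auto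
  moreover have "(A*C)^2 = s^2 - 4*p^2"
  proof -
    have "(A*C)^2 = A^2 * C^2" by (simp add: power_mult_distrib)
    also have "\<dots> = (s + 2*p) * (s - 2*p)" using assms by simp
    also have "\<dots> = s^2 - 4*p^2" by (simp add: power2_eq_square algebra_simps)
    finally show ?thesis .
  qed
  moreover have "(2 - s)^2 = 4 - 4 * s + s^2" by (simp add: power2_diff)
  ultimately show ?thesis by simp
qed

lemma real_bwd:
  fixes A C ne nb p :: real
  assumes "A \<ge> 0" "C \<ge> 0" "A^2 = ne^2 + nb^2 + 2*p" "C^2 = ne^2 + nb^2 - 2*p"
    "ne \<ge> 0" "nb \<ge> 0" "\<bar>p\<bar> \<le> ne * nb" "ne < 1" "ne^2 + nb^2 - p^2 \<le> 1"
  shows "A + C \<le> 2"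
proof -
  define s where "s = ne^2 + nb^2"
  have "\<bar>p\<bar>^2 \<le> (ne*nb)^2" using assms(7) by (intro power_mono) auto
  hence "p^2 \<le> (ne*nb)^2" by simp
  hence "p^2 \<le> ne^2 * nb^2" by (simp add: power_mult_distrib)
  moreover have "(1 - ne^2) * (1 - nb^2) = 1 - ne^2 - nb^2 + ne^2 * nb^2" by (simp add: algebra_simps)
  ultimately have "(1 - ne^2) * (1 - nb^2) \<ge> 0" using assms(9) by linarith
  moreover have "1 - ne^2 > 0" using assms(5,8) by (simp add: abs_square_less_1)
  ultimately have "1 - nb^2 \<ge> 0" by (simp add: zero_le_mult_iff)
  moreover have "ne^2 \<le> 1" using assms(5,8) by (simp add: abs_square_le_1)
  ultimately have s2: "s \<le> 2" unfolding s_def by simp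
  have "(A*C)^2 = A^2 * C^2" by (simp add: power_mult_distrib)
  also have "\<dots> = (s + 2*p) * (s - 2*p)" using assms(3,4) unfolding s_def by simp
  also have "\<dots> = s^2 - 4*p^2" by (simp add: power2_eq_square algebra_simps)
  also have "\<dots> \<le> (2 - s)^2"
  proof -
    have "(2 - s)^2 = 4 - 4 * s + s^2" by (simp add: power2_diff)
    thus ?thesis using assms(9) unfolding s_def by simp
  qed
  finally have acsq: "(A*C)^2 \<le> (2-s)^2" .
  have ac: "A*C \<le> 2 - s" using power2_le_imp_le[OF acsq] s2 by simp
  have "(A+C)^2 = A^2 + C^2 + 2*(A*C)" by (simp add: power2_sum)
  hence "(A+C)^2 \<le> 4" using assms(3,4) ac unfolding s_def by linarith
  hence "(A+C)^2 \<le> 2^2" by simp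
  thus ?thesis by (rule power2_le_imp_le) simp
qed

lemma norm_sum_sq1: fixes e b :: "real^3" shows "(norm (e+b))^2 = (norm e)^2 + (norm b)^2 + 2*(e \<bullet> b)"
  unfolding dot_norm[of e b] by (simp add: field_simps)

lemma norm_sum_sq2: fixes e b :: "real^3" shows "(norm (e-b))^2 = (norm e)^2 + (norm b)^2 - 2*(e \<bullet> b)"
  unfolding dot_norm_neg[of e b] by (simp add: field_simps)

lemma sum_bool: "sum f (UNIV::bool set) = f True + f False"
  by (simp add: UNIV_bool add.commute)

lemma sum_bool2: "sum f (UNIV::(bool\<times>bool) set) = f (True,True) + f (True,False) + f (False,True) + f (False,False)"
proof -
  have U: "(UNIV::(bool\<times>bool) set) = {(True,True),(True,False),(False,True),(False,False)}" by auto
  show ?thesis unfolding U by (simp add: algebra_simps)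
qed

theorem mainTheorem3:
  fixes e b :: "real ^ 3" and b0 :: real
  assumes "norm e < 1"
    and "qubit_effect (bloch b0 b)"
  shows "(jointly_measurable (two_outcome (bloch 1 e)) (two_outcome (bloch b0 b)) \<longrightarrow>
            (norm e)\<^sup>2 + (norm b)\<^sup>2 - (e \<bullet> b)\<^sup>2 \<le> 1 \<and> norm (e + b) + norm (e - b) \<le> 2)
       \<and> (b0 = 1 \<and> (norm e)\<^sup>2 + (norm b)\<^sup>2 \<le> 1 + (e \<bullet> b)\<^sup>2 \<longrightarrow>
            jointly_measurable (two_outcome (bloch 1 e)) (two_outcome (bloch b0 b)))"
proof (intro conjI impI)
  assume jm: "jointly_measurable (two_outcome (bloch 1 e)) (two_outcome (bloch b0 b))"
  then obtain N :: "bool \<times> bool \<Rightarrow> qmat" where pN: "povm N"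
    and r: "\<And>i. (\<Sum>j\<in>UNIV. N (i, j)) = two_outcome (bloch 1 e) i"
    and c: "\<And>j. (\<Sum>i\<in>UNIV. N (i, j)) = two_outcome (bloch b0 b) j"
    unfolding jointly_measurable_def by blast
  have "\<forall>ij. \<exists>x m. N ij = bloch x m" using pN psd_is_bloch unfolding povm_def by blast
  then obtain X M where XM: "\<And>ij. N ij = bloch (X ij) (M ij)" by metis
  have nM: "\<And>ij. norm (M ij) \<le> X ij" using pN XM psd_bloch unfolding povm_def by metis
  have r1: "X (True,True) + X (True,False) = 1 \<and> M (True,True) + M (True,False) = e"
    using r[of True] by (simp add: sum_bool XM bloch_add bloch_inj two_outcome_def)
  have r2: "X (False,True) + X (False,False) = 1 \<and> M (False,True) + M (False,False) = 0 - e"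
    using r[of False] by (simp add: sum_bool XM bloch_add bloch_inj two_outcome_def mat1_bloch bloch_diff)
  have c1: "M (True,True) + M (False,True) = b"
    using c[of True] by (simp add: sum_bool XM bloch_add bloch_inj two_outcome_def)
  have c2: "M (True,False) + M (False,False) = 0 - b"
    using c[of False] by (simp add: sum_bool XM bloch_add bloch_inj two_outcome_def mat1_bloch bloch_diff)
  have eb1: "e + b = M (True,True) - M (False,False)"
    unfolding vec_eq_iff
  proof
    fix i
    have "M (True,True) $ i + M (True,False) $ i = e $ i" "M (False,True) $ i + M (False,False) $ i = - e $ i"
      "M (True,True) $ i + M (False,True) $ i = b $ i"
      using r1 r2 c1 by (auto simp: vec_eq_iff)
    thus "(e + b) $ i = (M (True,True) - M (False,False)) $ i" by simp
  qed
  have eb2: "e - b = M (True,False) - M (False,True)"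
    unfolding vec_eq_iff
  proof
    fix i
    have "M (True,True) $ i + M (True,False) $ i = e $ i"
      "M (True,True) $ i + M (False,True) $ i = b $ i"
      using r1 c1 by (auto simp: vec_eq_iff)
    thus "(e - b) $ i = (M (True,False) - M (False,True)) $ i" by simp
  qed
  have "norm (e + b) \<le> norm (M (True,True)) + norm (M (False,False))"
    unfolding eb1 by (rule norm_triangle_ineq4)
  moreover have "norm (e - b) \<le> norm (M (True,False)) + norm (M (False,True))"
    unfolding eb2 by (rule norm_triangle_ineq4)
  moreover note nM[of "(True,True)"] nM[of "(True,False)"] nM[of "(False,True)"] nM[of "(False,False)"]
  ultimately show tri: "norm (e + b) + norm (e - b) \<le> 2" using r1 r2 by linarith
  show "(norm e)\<^sup>2 + (norm b)\<^sup>2 - (e \<bullet> b)\<^sup>2 \<le> 1"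
    using real_fwd[of "norm (e+b)" "norm (e-b)" "(norm e)\<^sup>2 + (norm b)\<^sup>2" "e \<bullet> b"]
      norm_sum_sq1[of e b] norm_sum_sq2[of e b] tri by simp
next
  assume h: "b0 = 1 \<and> (norm e)\<^sup>2 + (norm b)\<^sup>2 \<le> 1 + (e \<bullet> b)\<^sup>2"
  have tri: "norm (e + b) + norm (e - b) \<le> 2"
    using real_bwd[of "norm (e+b)" "norm (e-b)" "norm e" "norm b" "e \<bullet> b"]
      norm_sum_sq1[of e b] norm_sum_sq2[of e b] Cauchy_Schwarz_ineq2[of e b] assms(1) h by simp
  define x where "x = norm (e + b) / 2"
  define N :: "bool \<times> bool \<Rightarrow> qmat" where "N = (\<lambda>(i,j). if i then (if j then bloch x ((1/2) *\<^sub>R (e+b)) else bloch (1-x) ((1/2) *\<^sub>R (e-b)))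
      else (if j then bloch (1-x) ((1/2) *\<^sub>R (b-e)) else bloch x ((1/2) *\<^sub>R (-(e+b)))))"
  have nb: "norm (b - e) = norm (e - b)" by (rule norm_minus_commute)
  have nb2: "norm (- e - b) = norm (e + b)" using norm_minus_cancel[of "e+b"] by simp
  have "\<forall>ij. psd (N ij)"
  proof
    fix ij :: "bool \<times> bool"
    show "psd (N ij)" using tri nb nb2
      by (cases ij) (auto simp: N_def psd_bloch x_def)
  qed
  moreover have "(\<Sum>ij\<in>UNIV. N ij) = mat 1"
    by (simp add: sum_bool2 N_def bloch_add mat1_bloch bloch_inj vec3_eq field_simps)
  moreover have "\<forall>i. (\<Sum>j\<in>UNIV. N (i, j)) = two_outcome (bloch 1 e) i"
    by (auto simp: sum_bool N_def bloch_add mat1_bloch bloch_diff bloch_inj vec3_eq two_outcome_def field_simps)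
  moreover have "\<forall>j. (\<Sum>i\<in>UNIV. N (i, j)) = two_outcome (bloch b0 b) j"
    using h by (auto simp: sum_bool N_def bloch_add mat1_bloch bloch_diff bloch_inj vec3_eq two_outcome_def field_simps)
  ultimately show "jointly_measurable (two_outcome (bloch 1 e)) (two_outcome (bloch b0 b))"
    unfolding jointly_measurable_def povm_def by blast
qed

end
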